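(* Let $V=V_0\uplus V_1\uplus\dots\uplus V_m$ be a partition of a vector configuration $V$ into subconfigurations. Then $\operatorname{codeg}^*(V)\ge\sum_{i=0}^m\operatorname{codeg}^*(V_i)$.
   Context: A vector configuration is a finite family (repetitions allowed) of vectors in $\mathbb{R}^r$; cardinalities count multiplicities. For a nonzero linear functional $f$ on $\mathbb{R}^r$ let $H=\{f=0\}$ and $\overline{H}^-=\{f\le0\}$. The dual codegree of a configuration $W$ is $\operatorname{codeg}^*(W)=\min_H|\overline{H}^-\cap W|$, the minimum over all such oriented linear hyperplanes $H$ of $\mathbb{R}^r$. *)

theory Defs
  imports "HOL-Analysis.Analysis" "HOL-Library.Multiset"
begin

text \<open>A vector configuration in R^r is a finite multiset of vectors of type real^'n
  (r = CARD('n)).\<close>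

definition dual_codeg :: "(real ^ 'n) multiset \<Rightarrow> nat" where
  "dual_codeg W = Min {size (filter_mset (\<lambda>v. f v \<le> 0) W) | f :: real ^ 'n \<Rightarrow> real.
                        linear f \<and> f \<noteq> (\<lambda>_. 0)}"

end

theory Submission
  imports Defs
begin

lemma dc_fin: "finite {size (filter_mset (\<lambda>v. f v \<le> 0) W) | f :: real ^ 'n \<Rightarrow> real.
                        linear f \<and> f \<noteq> (\<lambda>_. 0)}"
proof (rule finite_subset[of _ "{..size W}"])
  show "{size (filter_mset (\<lambda>v. f v \<le> 0) W) | f :: real ^ 'n \<Rightarrow> real.
                        linear f \<and> f \<noteq> (\<lambda>_. 0)} \<subseteq> {..size W}"
    using size_filter_mset_lesseq by fastforce
qed simp

lemma dc_le:
  fixes f :: "real ^ 'n \<Rightarrow> real"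
  assumes "linear f" "f \<noteq> (\<lambda>_. 0)"
  shows "dual_codeg W \<le> size (filter_mset (\<lambda>v. f v \<le> 0) W)"
  unfolding dual_codeg_def using assms by (intro Min_le[OF dc_fin]) blast

lemma dc_ne: "{size (filter_mset (\<lambda>v. f v \<le> 0) W) | f :: real ^ 'n \<Rightarrow> real.
                        linear f \<and> f \<noteq> (\<lambda>_. 0)} \<noteq> {}"
proof -
  obtain k :: 'n where True by blast
  let ?f = "\<lambda>x::real^'n. inner (axis k 1) x"
  have "linear ?f" by (simp add: bounded_linear.linear bounded_linear_inner_right)
  moreover have "?f \<noteq> (\<lambda>_. 0)"
  proof
    assume "?f = (\<lambda>_. 0)"
    then have "?f (axis k 1) = 0" by metis
    then show False by simp
  qed
  ultimately show ?thesis by blast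
qed

lemma dc_ex: "\<exists>f :: real ^ 'n \<Rightarrow> real. linear f \<and> f \<noteq> (\<lambda>_. 0) \<and>
   dual_codeg W = size (filter_mset (\<lambda>v. f v \<le> 0) W)"
proof -
  have "dual_codeg W \<in> {size (filter_mset (\<lambda>v. f v \<le> 0) W) | f :: real ^ 'n \<Rightarrow> real.
                        linear f \<and> f \<noteq> (\<lambda>_. 0)}"
    unfolding dual_codeg_def by (rule Min_in[OF dc_fin dc_ne])
  then show ?thesis by blast
qed

lemma size_filter_sum: "size (filter_mset P (\<Sum>i\<in>A. Vs i)) = (\<Sum>i\<in>A. size (filter_mset P (Vs i)))"
  by (induction A rule: infinite_finite_induct) (auto simp: size_union)

theorem mainTheorem5:
  fixes V :: "(real ^ 'n) multiset" and Vs :: "nat \<Rightarrow> (real ^ 'n) multiset" and m :: nat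
  assumes "V = (\<Sum>i\<in>{0..m}. Vs i)"
  shows "dual_codeg V \<ge> (\<Sum>i\<in>{0..m}. dual_codeg (Vs i))"
proof -
  obtain f :: "real ^ 'n \<Rightarrow> real" where f: "linear f" "f \<noteq> (\<lambda>_. 0)"
    and eq: "dual_codeg V = size (filter_mset (\<lambda>v. f v \<le> 0) V)"
    using dc_ex by blast
  have "(\<Sum>i\<in>{0..m}. dual_codeg (Vs i)) \<le> (\<Sum>i\<in>{0..m}. size (filter_mset (\<lambda>v. f v \<le> 0) (Vs i)))"
    by (intro sum_mono dc_le f)
  also have "\<dots> = dual_codeg V" using eq assms by (simp add: size_filter_sum)
  finally show ?thesis .
qed

end
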